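(* Let $n\ge 1$, let $\Delta := (\sqrt{n+1})^{n+1}$, and let $X=\{x_1,\ldots,x_v\}\subseteq\{0,1\}^n$ be non-empty. Let $A\in\mathbb{Z}^{f\times n}$, $b\in\mathbb{Z}^f$ with all entries of absolute value at most $\Delta$ be such that $\{x\in\mathbb{R}^n\mid Ax\le b\}=\operatorname{conv}(X)$ is a non-redundant description, and let $S\in\mathbb{R}^{f\times v}$ be the slack matrix, $S_{ij}=b_i-A_ix_j$ (so $S_{ij}\in\{0,1,\ldots,(n+1)\Delta\}$). Let $S=UV$ with $U\in\mathbb{R}_{\ge0}^{f\times r}$, $V\in\mathbb{R}_{\ge 0}^{r\times v}$ be a normalized non-negative factorization, i.e. $\|U^\ell\|_\infty=\|V_\ell\|_\infty$ for every $\ell=1,\ldots,r$. Then $\|U\|_\infty\le\Delta$ and $\|V\|_\infty\le\Delta$.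
   Context: $A_i$ denotes the $i$-th row of a matrix $A$ and $A^i$ its $i$-th column; for a matrix or vector, $\|\cdot\|_\infty$ denotes the maximum absolute value of an entry. So $U^\ell$ is the $\ell$-th column of $U$ and $V_\ell$ the $\ell$-th row of $V$. *)

theory Defs
  imports "HOL-Analysis.Analysis"
begin

definition row_apply :: "('n::finite \<Rightarrow> int) \<Rightarrow> real^'n \<Rightarrow> real" where
  "row_apply a y = (\<Sum>k\<in>UNIV. of_int (a k) * y $ k)"

definition polyhedron :: "nat \<Rightarrow> (nat \<Rightarrow> 'n::finite \<Rightarrow> int) \<Rightarrow> (nat \<Rightarrow> int) \<Rightarrow> (real^'n) set" where
  "polyhedron f A b = {y. \<forall>i<f. row_apply (A i) y \<le> of_int (b i)}"

definition non_redundant :: "nat \<Rightarrow> (nat \<Rightarrow> 'n::finite \<Rightarrow> int) \<Rightarrow> (nat \<Rightarrow> int) \<Rightarrow> bool" where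
  "non_redundant f A b = (\<forall>i<f.
     {y. \<forall>k<f. k \<noteq> i \<longrightarrow> row_apply (A k) y \<le> of_int (b k)} \<noteq> polyhedron f A b)"

definition slack :: "(nat \<Rightarrow> 'n::finite \<Rightarrow> int) \<Rightarrow> (nat \<Rightarrow> int) \<Rightarrow> (nat \<Rightarrow> real^'n) \<Rightarrow> nat \<Rightarrow> nat \<Rightarrow> real" where
  "slack A b x i j = of_int (b i) - row_apply (A i) (x j)"

definition col_inf_norm :: "nat \<Rightarrow> (nat \<Rightarrow> nat \<Rightarrow> real) \<Rightarrow> nat \<Rightarrow> real" where
  "col_inf_norm f U l = Max ((\<lambda>i. \<bar>U i l\<bar>) ` {..<f})"

definition row_inf_norm :: "nat \<Rightarrow> (nat \<Rightarrow> nat \<Rightarrow> real) \<Rightarrow> nat \<Rightarrow> real" where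
  "row_inf_norm v V l = Max ((\<lambda>j. \<bar>V l j\<bar>) ` {..<v})"

end

theory Submission
  imports Defs
begin

theorem lemma2:
  fixes x :: "nat \<Rightarrow> real^'n" and v f r :: nat
    and A :: "nat \<Rightarrow> 'n \<Rightarrow> int" and b :: "nat \<Rightarrow> int"
    and U V :: "nat \<Rightarrow> nat \<Rightarrow> real" and \<Delta> :: real
  assumes Delta: "\<Delta> = sqrt (real CARD('n) + 1) ^ (CARD('n) + 1)"
    and v_pos: "v \<ge> 1"
    and x_inj: "inj_on x {..<v}"
    and x_01: "\<forall>j<v. \<forall>k. x j $ k \<in> {0, 1}"
    and A_bound: "\<forall>i<f. \<forall>k. \<bar>real_of_int (A i k)\<bar> \<le> \<Delta>"
    and b_bound: "\<forall>i<f. \<bar>real_of_int (b i)\<bar> \<le> \<Delta>"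
    and descr: "polyhedron f A b = convex hull (x ` {..<v})"
    and nonred: "non_redundant f A b"
    and factor: "\<forall>i<f. \<forall>j<v. slack A b x i j = (\<Sum>l<r. U i l * V l j)"
    and U_nonneg: "\<forall>i<f. \<forall>l<r. U i l \<ge> 0"
    and V_nonneg: "\<forall>l<r. \<forall>j<v. V l j \<ge> 0"
    and normalized: "\<forall>l<r. col_inf_norm f U l = row_inf_norm v V l"
  shows "(\<forall>i<f. \<forall>l<r. \<bar>U i l\<bar> \<le> \<Delta>) \<and> (\<forall>l<r. \<forall>j<v. \<bar>V l j\<bar> \<le> \<Delta>)"
proof -
  define m where "m = real CARD('n) + 1"
  have m2: "m \<ge> 2" using m_def by simp
  have sq1: "sqrt m \<ge> 1" using m2 by simp
  have "\<Delta> = sqrt m ^ 2 * sqrt m ^ (CARD('n) - 1)"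
  proof -
    have "CARD('n) \<ge> 1" using finite_UNIV_card_ge_0[where 'a='n] by simp
    hence "CARD('n) + 1 = 2 + (CARD('n) - 1)" by simp
    thus ?thesis unfolding Delta m_def by (simp only: power_add)
  qed
  also have "\<dots> \<ge> m * 1"
    using m2 sq1 by (simp add: one_le_power)
  finally have Dm: "\<Delta> \<ge> m" by simp
  have D0: "\<Delta> \<ge> 0" using Dm m2 by simp
  have fpos: "f > 0"
  proof (rule ccontr)
    assume "\<not> f > 0"
    hence "polyhedron f A b = UNIV" unfolding polyhedron_def by auto
    moreover have "bounded (convex hull (x ` {..<v}))"
      by (simp add: compact_imp_bounded compact_convex_hull finite_imp_compact)
    ultimately show False using descr not_bounded_UNIV by metis
  qed
  have slackb: "slack A b x i j \<le> m * \<Delta>" if i: "i < f" and j: "j < v" for i j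
  proof -
    have "- row_apply (A i) (x j) \<le> (\<Sum>k\<in>UNIV. \<bar>of_int (A i k) * x j $ k\<bar>)"
      unfolding row_apply_def
      using abs_ge_minus_self sum_abs order_trans by blast
    also have "\<dots> \<le> (\<Sum>k\<in>(UNIV::'n set). \<Delta>)"
    proof (rule sum_mono)
      fix k
      have "x j $ k = 0 \<or> x j $ k = 1" using x_01 j by auto
      hence "\<bar>x j $ k\<bar> \<le> 1" by auto
      hence "\<bar>of_int (A i k)\<bar> * \<bar>x j $ k\<bar> \<le> \<Delta> * 1"
        using A_bound i D0 by (intro mult_mono) auto
      thus "\<bar>of_int (A i k) * x j $ k\<bar> \<le> \<Delta>" by (simp add: abs_mult)
    qed
    also have "\<dots> = real CARD('n) * \<Delta>" by simp
    finally have "- row_apply (A i) (x j) \<le> real CARD('n) * \<Delta>" .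
    moreover have "of_int (b i) \<le> \<Delta>" using b_bound i by auto
    ultimately show ?thesis unfolding slack_def m_def by (simp add: algebra_simps)
  qed
  have key: "col_inf_norm f U l \<le> \<Delta> \<and> (\<forall>i<f. \<bar>U i l\<bar> \<le> col_inf_norm f U l)
      \<and> (\<forall>j<v. \<bar>V l j\<bar> \<le> col_inf_norm f U l)" if l: "l < r" for l
  proof -
    let ?M = "col_inf_norm f U l"
    have fin1: "finite ((\<lambda>i. \<bar>U i l\<bar>) ` {..<f})" and ne1: "(\<lambda>i. \<bar>U i l\<bar>) ` {..<f} \<noteq> {}"
      using fpos by auto
    have fin2: "finite ((\<lambda>j. \<bar>V l j\<bar>) ` {..<v})" and ne2: "(\<lambda>j. \<bar>V l j\<bar>) ` {..<v} \<noteq> {}"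
      using v_pos by (auto simp: lessThan_empty_iff)
    obtain i0 where i0: "i0 < f" "?M = \<bar>U i0 l\<bar>"
      using Max_in[OF fin1 ne1] unfolding col_inf_norm_def by auto
    obtain j0 where j0: "j0 < v" "row_inf_norm v V l = \<bar>V l j0\<bar>"
      using Max_in[OF fin2 ne2] unfolding row_inf_norm_def by auto
    have Ub: "\<forall>i<f. \<bar>U i l\<bar> \<le> ?M"
      unfolding col_inf_norm_def using fin1 by auto
    have Vb: "\<forall>j<v. \<bar>V l j\<bar> \<le> ?M"
      using normalized l fin2 unfolding row_inf_norm_def by auto
    have M0: "?M \<ge> 0" using i0 by simp
    have "?M * ?M = U i0 l * V l j0"
      using i0 j0 normalized l U_nonneg V_nonneg by auto
    also have "\<dots> \<le> (\<Sum>l'<r. U i0 l' * V l' j0)"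
      using l U_nonneg V_nonneg i0 j0
      by (intro member_le_sum) auto
    also have "\<dots> \<le> m * \<Delta>" using factor slackb i0 j0 by metis
    also have "\<dots> \<le> \<Delta> * \<Delta>" using Dm D0 by (simp add: mult_right_mono)
    finally have "?M * ?M \<le> \<Delta> * \<Delta>" .
    hence "?M\<^sup>2 \<le> \<Delta>\<^sup>2" by (simp add: power2_eq_square)
    hence "?M \<le> \<Delta>" using D0 by (rule power2_le_imp_le)
    with Ub Vb show ?thesis by blast
  qed
  show ?thesis
  proof (intro conjI allI impI)
    fix i l assume "i < f" "l < r"
    thus "\<bar>U i l\<bar> \<le> \<Delta>" using key[of l] by fastforce
  next
    fix l j assume "l < r" "j < v"
    thus "\<bar>V l j\<bar> \<le> \<Delta>" using key[of l] by fastforce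
  qed
qed

end
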